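(* Let $n\ge4$ with $n\ne 6,10$. Then $\gamma_e(P_n)\ge\lceil (n+3)/2\rceil$.
   Context: $P_n$ is the path on $n$ vertices $[x_1,\dots,x_n]$ with edges $\{x_i,x_{i+1}\}$. In a finite simple graph $\Gamma=(V,E)$ with distance $d$, a vertex $v$ carrying a non-negative integer label $\ell$ dominates (covers) exactly the vertices $u$ with $d(u,v)=\ell$; a vertex labeled $0$ dominates only itself. An extended irregular dominating set is a set $S\subseteq V$ with a labeling $\lambda:S\to\mathbb{Z}_{\ge0}$ with distinct labels on distinct vertices, such that every vertex of $V$ is dominated by some vertex of $S$; some vertex of $S$ has label $0$. $\gamma_e(\Gamma)$ denotes the minimum cardinality of an extended irregular dominating set of $\Gamma$. *)

theory Defs
  imports Complex_Main "HOL-Library.Extended_Nat"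
begin

text \<open>A finite simple graph is given by a vertex set V and a set E of 2-element
  subsets of V (edges). Graph distance is the length of a shortest walk,
  infinite if no walk exists.\<close>

definition walk_of_length :: "'a set set \<Rightarrow> nat \<Rightarrow> 'a \<Rightarrow> 'a \<Rightarrow> bool" where
  "walk_of_length E k u v \<longleftrightarrow>
     (\<exists>p :: nat \<Rightarrow> 'a. p 0 = u \<and> p k = v \<and> (\<forall>i<k. {p i, p (Suc i)} \<in> E))"

definition gdist :: "'a set set \<Rightarrow> 'a \<Rightarrow> 'a \<Rightarrow> enat" where
  "gdist E u v = (INF k \<in> {k. walk_of_length E k u v}. enat k)"

definition dominates :: "'a set set \<Rightarrow> 'a \<Rightarrow> nat \<Rightarrow> 'a \<Rightarrow> bool" where
  "dominates E v l u \<longleftrightarrow> gdist E u v = enat l"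

definition ext_irr_dom_set :: "'a set \<Rightarrow> 'a set set \<Rightarrow> 'a set \<Rightarrow> ('a \<Rightarrow> nat) \<Rightarrow> bool" where
  "ext_irr_dom_set V E S lam \<longleftrightarrow>
     S \<subseteq> V \<and> inj_on lam S \<and>
     (\<forall>u\<in>V. \<exists>v\<in>S. dominates E v (lam v) u) \<and>
     (\<exists>v\<in>S. lam v = 0)"

definition gamma_e :: "'a set \<Rightarrow> 'a set set \<Rightarrow> nat" where
  "gamma_e V E = (LEAST k. \<exists>S lam. ext_irr_dom_set V E S lam \<and> card S = k)"

definition path_V :: "nat \<Rightarrow> nat set" where
  "path_V n = {1..n}"

definition path_E :: "nat \<Rightarrow> nat set set" where
  "path_E n = {{i, i + 1} | i. 1 \<le> i \<and> i < n}"

end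

theory Submission
  imports Defs
begin


lemma edge_path: "{a, b} \<in> path_E n \<Longrightarrow> b = a + 1 \<or> a = b + 1"
  unfolding path_E_def by (auto simp: doubleton_eq_iff)

lemma walk_lb:
  assumes "walk_of_length (path_E n) k u v"
  shows "nat \<bar>int u - int v\<bar> \<le> k"
proof -
  obtain p where p: "p 0 = u" "p k = v" "\<forall>i<k. {p i, p (Suc i)} \<in> path_E n"
    using assms unfolding walk_of_length_def by blast
  have "\<forall>i\<le>k. nat \<bar>int u - int (p i)\<bar> \<le> i"
  proof (intro allI impI)
    fix i assume "i \<le> k" then show "nat \<bar>int u - int (p i)\<bar> \<le> i"
    proof (induction i)
      case 0 then show ?case using p by simp
    next
      case (Suc i)
      then have "{p i, p (Suc i)} \<in> path_E n" using p by simp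
      then have "p (Suc i) = p i + 1 \<or> p i = p (Suc i) + 1" by (rule edge_path)
      with Suc show ?case by auto
    qed
  qed
  then show ?thesis using p by auto
qed

lemma walk_ex:
  assumes "u \<in> {1..n}" "v \<in> {1..n}"
  shows "walk_of_length (path_E n) (nat \<bar>int u - int v\<bar>) u v"
proof (cases "u \<le> v")
  case True
  have "\<forall>i<nat \<bar>int u - int v\<bar>. {u + i, Suc (u + i)} \<in> path_E n"
  proof (intro allI impI)
    fix i assume "i < nat \<bar>int u - int v\<bar>"
    then have "1 \<le> u + i \<and> u + i < n" using True assms by auto
    then show "{u + i, Suc (u + i)} \<in> path_E n" unfolding path_E_def by auto
  qed
  then show ?thesis unfolding walk_of_length_def
    by (intro exI[of _ "\<lambda>i. u + i"]) (use True in auto)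
next
  case False
  have "\<forall>i<nat \<bar>int u - int v\<bar>. {u - i, u - Suc i} \<in> path_E n"
  proof (intro allI impI)
    fix i assume "i < nat \<bar>int u - int v\<bar>"
    then have "1 \<le> u - Suc i \<and> u - Suc i < n \<and> u - i = u - Suc i + 1" using False assms by auto
    then show "{u - i, u - Suc i} \<in> path_E n" unfolding path_E_def
      by (auto intro!: exI[of _ "u - Suc i"])
  qed
  then show ?thesis unfolding walk_of_length_def
    by (intro exI[of _ "\<lambda>i. u - i"]) (use False in auto)
qed

lemma gdist_path:
  assumes "u \<in> {1..n}" "v \<in> {1..n}"
  shows "gdist (path_E n) u v = enat (nat \<bar>int u - int v\<bar>)"
  unfolding gdist_def
proof (rule antisym)
  show "(INF k\<in>{k. walk_of_length (path_E n) k u v}. enat k) \<le> enat (nat \<bar>int u - int v\<bar>)"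
    by (rule INF_lower2[of "nat \<bar>int u - int v\<bar>"]) (use walk_ex[OF assms] in auto)
  show "enat (nat \<bar>int u - int v\<bar>) \<le> (INF k\<in>{k. walk_of_length (path_E n) k u v}. enat k)"
    by (rule INF_greatest) (use walk_lb in auto)
qed

lemma dominates_path:
  assumes "u \<in> {1..n}" "v \<in> {1..n}"
  shows "dominates (path_E n) v l u \<longleftrightarrow> (u + l = v \<or> u = v + l)"
  unfolding dominates_def gdist_path[OF assms] by auto



lemma core_struct:
  fixes n :: nat and S :: "nat set" and lam :: "nat \<Rightarrow> nat" and f :: "nat \<Rightarrow> nat"
  assumes SV: "S \<subseteq> {1..n}" and inj: "inj_on lam S"
    and fS: "\<forall>u\<in>{1..n}. f u \<in> S \<and> (u + lam (f u) = f u \<or> u = f u + lam (f u))"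
    and small: "card S + (n - 1) div 2 \<le> n"
  shows "\<forall>l\<in>{1..(n - 1) div 2}. \<exists>c lo. c \<in> S \<and> lam c = l \<and> 1 \<le> lo \<and> c = lo + l \<and> lo + 2 * l \<le> n
            \<and> f lo = c \<and> f (lo + 2 * l) = c"
    and "\<forall>v\<in>S. lam v = 0 \<longrightarrow> f v = v"
proof -
  let ?V = "{1..n}"
  define h where "h = (n - 1) div 2"
  define F where "F v = {u\<in>?V. f u = v}" for v
  define P where "P v \<longleftrightarrow> 1 \<le> lam v \<and> 2 * lam v < n" for v
  define w where "w v = (if P v then 2 else 1 :: nat)" for v
  define Sm where "Sm = {v\<in>S. P v}"
  have finS: "finite S" using SV finite_subset by blast
  have FV: "\<Union>(F ` S) = ?V" unfolding F_def using fS by auto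
  have cardV: "n = (\<Sum>v\<in>S. card (F v))"
  proof -
    have "card (\<Union>(F ` S)) = (\<Sum>v\<in>S. card (F v))"
      by (rule card_UN_disjoint) (use finS in \<open>auto simp: F_def\<close>)
    then show ?thesis using FV by simp
  qed
  have Fsub: "F v \<subseteq> {u\<in>?V. u + lam v = v \<or> u = v + lam v}" if "v \<in> S" for v
    unfolding F_def using fS by auto
  have Fw: "card (F v) \<le> w v" if "v \<in> S" for v
  proof (cases "P v")
    case True
    have "F v \<subseteq> {v - lam v, v + lam v}" using Fsub[OF that] by auto
    then have "card (F v) \<le> card {v - lam v, v + lam v}" by (intro card_mono) auto
    also have "\<dots> \<le> 2" by (simp add: card_insert_le_m1)
    finally show ?thesis using True by (simp add: w_def)
  next
    case False
    have "\<forall>x\<in>F v. \<forall>y\<in>F v. x = y"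
    proof (intro ballI)
      fix x y assume "x \<in> F v" "y \<in> F v"
      then have "x \<in> ?V \<and> (x + lam v = v \<or> x = v + lam v)" "y \<in> ?V \<and> (y + lam v = v \<or> y = v + lam v)"
        using Fsub[OF that] by auto
      then show "x = y" using False unfolding P_def by auto
    qed
    then have "card (F v) \<le> Suc 0" by (subst card_le_Suc0_iff_eq) (auto simp: F_def)
    then show ?thesis using False by (simp add: w_def)
  qed
  have sumw: "(\<Sum>v\<in>S. w v) = card S + card Sm"
  proof -
    have "(\<Sum>v\<in>S. w v) = (\<Sum>v\<in>S. 1 + (if P v then 1 else 0))"
      by (rule sum.cong) (auto simp: w_def)
    also have "\<dots> = card S + (\<Sum>v\<in>S. if P v then 1 else 0)" by (simp only: sum.distrib) simp
    also have "(\<Sum>v\<in>S. if P v then 1 else 0) = card Sm"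
      unfolding Sm_def using finS by (simp add: sum.If_cases Int_def)
    finally show ?thesis .
  qed
  have img: "lam ` Sm \<subseteq> {1..h}" unfolding Sm_def P_def h_def by auto
  have injSm: "inj_on lam Sm" using inj unfolding Sm_def by (auto intro: inj_on_subset)
  have cSm: "card Sm \<le> h"
    using card_mono[OF _ img] card_image[OF injSm] by simp
  have le: "(\<Sum>v\<in>S. card (F v)) \<le> (\<Sum>v\<in>S. w v)" by (rule sum_mono) (use Fw in auto)
  have eqs: "card Sm = h" using cardV le sumw cSm small unfolding h_def by linarith
  have imgeq: "lam ` Sm = {1..h}"
    by (rule card_subset_eq) (use img card_image[OF injSm] eqs in auto)
  have allw: "\<forall>v\<in>S. card (F v) = w v"
  proof (rule ccontr)
    assume "\<not> ?thesis"
    then obtain a where "a \<in> S" "card (F a) < w a" using Fw le_neq_implies_less by blast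
    then have "(\<Sum>v\<in>S. card (F v)) < (\<Sum>v\<in>S. w v)"
      by (intro sum_strict_mono_ex1) (use finS Fw in auto)
    then show False using cardV sumw eqs small unfolding h_def by linarith
  qed
  show "\<forall>l\<in>{1..(n - 1) div 2}. \<exists>c lo. c \<in> S \<and> lam c = l \<and> 1 \<le> lo \<and> c = lo + l \<and> lo + 2 * l \<le> n
            \<and> f lo = c \<and> f (lo + 2 * l) = c"
  proof
    fix l assume "l \<in> {1..(n - 1) div 2}"
    then obtain c where c: "c \<in> Sm" "lam c = l" using imgeq unfolding h_def by (metis imageE)
    then have cS: "c \<in> S" and Pc: "P c" unfolding Sm_def by auto
    have "card (F c) = 2" using allw cS Pc by (simp add: w_def)
    then obtain x y where xy: "F c = {x, y}" "x \<noteq> y" by (auto simp: card_2_iff)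
    have hx: "x \<in> ?V \<and> (x + l = c \<or> x = c + l)" and hy: "y \<in> ?V \<and> (y + l = c \<or> y = c + l)"
      using Fsub[OF cS] xy c by auto
    have fxy: "f x = c" "f y = c" using xy unfolding F_def by auto
    have "\<exists>lo. 1 \<le> lo \<and> c = lo + l \<and> lo + 2 * l \<le> n \<and> f lo = c \<and> f (lo + 2 * l) = c"
    proof (cases "x + l = c")
      case True
      then have "y = c + l" using hy xy(2) by auto
      then show ?thesis using True hx hy fxy by (intro exI[of _ x]) (auto simp: mult_2 add.assoc)
    next
      case False
      then have "x = c + l" "y + l = c" using hx hy xy(2) by auto
      then show ?thesis using hx hy fxy by (intro exI[of _ y]) (auto simp: mult_2 add.assoc)
    qed
    then show "\<exists>c lo. c \<in> S \<and> lam c = l \<and> 1 \<le> lo \<and> c = lo + l \<and> lo + 2 * l \<le> n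
            \<and> f lo = c \<and> f (lo + 2 * l) = c"
      using cS c by blast
  qed
  show "\<forall>v\<in>S. lam v = 0 \<longrightarrow> f v = v"
  proof (intro ballI impI)
    fix v assume v: "v \<in> S" "lam v = 0"
    then have "card (F v) = 1" using allw by (simp add: w_def P_def)
    then obtain x where "F v = {x}" by (auto simp: card_1_singleton_iff)
    moreover have "F v \<subseteq> {v}" using Fsub[OF v(1)] v by auto
    ultimately show "f v = v" unfolding F_def by auto
  qed
qed



lemma lem_odd_int:
  fixes n k xa xb :: int
  assumes "0 \<le> k" "1 \<le> xa \<and> xa + 2 * (k+2) \<le> n"
    "1 \<le> xb \<and> xb + 2 * (k+1) \<le> n"
    "xa \<noteq> xb \<and> xa \<noteq> xb + 2 * (k+1) \<and> xa + 2 * (k+2) \<noteq> xb \<and> xa + 2 * (k+2) \<noteq> xb + 2 * (k+1) \<and> xa + (k+2) \<noteq> xb + (k+1)"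
    "n = 2 * k + 5"
  shows False
  using assms by (smt (z3))

lemma lem_odd:
  fixes n k xa xb :: nat
  assumes "1 \<le> xa \<and> xa + 2 * (k+2) \<le> n"
    "1 \<le> xb \<and> xb + 2 * (k+1) \<le> n"
    "xa \<noteq> xb \<and> xa \<noteq> xb + 2 * (k+1) \<and> xa + 2 * (k+2) \<noteq> xb \<and> xa + 2 * (k+2) \<noteq> xb + 2 * (k+1) \<and> xa + (k+2) \<noteq> xb + (k+1)"
    "n = 2 * k + 5"
  shows False
  apply (rule lem_odd_int[where n="int n" and k="int k" and xa="int xa" and xb="int xb"])
   apply simp
  using assms(1) apply simp
  using assms(2) apply simp
  using assms(3) apply simp
  using assms(4) apply simp
  done

lemma lem_8_int:
  fixes n k xa xb xc :: int
  assumes "0 \<le> k" "1 \<le> xa \<and> xa + 2 * (3) \<le> n"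
    "1 \<le> xb \<and> xb + 2 * (2) \<le> n"
    "1 \<le> xc \<and> xc + 2 * (1) \<le> n"
    "xa \<noteq> xb \<and> xa \<noteq> xb + 2 * (2) \<and> xa + 2 * (3) \<noteq> xb \<and> xa + 2 * (3) \<noteq> xb + 2 * (2) \<and> xa + (3) \<noteq> xb + (2)"
    "xa \<noteq> xc \<and> xa \<noteq> xc + 2 * (1) \<and> xa + 2 * (3) \<noteq> xc \<and> xa + 2 * (3) \<noteq> xc + 2 * (1) \<and> xa + (3) \<noteq> xc + (1)"
    "xb \<noteq> xc \<and> xb \<noteq> xc + 2 * (1) \<and> xb + 2 * (2) \<noteq> xc \<and> xb + 2 * (2) \<noteq> xc + 2 * (1) \<and> xb + (2) \<noteq> xc + (1)"
    "n = 8"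
  shows False
  using assms by (smt (z3))

lemma lem_8:
  fixes n k xa xb xc :: nat
  assumes "1 \<le> xa \<and> xa + 2 * (3) \<le> n"
    "1 \<le> xb \<and> xb + 2 * (2) \<le> n"
    "1 \<le> xc \<and> xc + 2 * (1) \<le> n"
    "xa \<noteq> xb \<and> xa \<noteq> xb + 2 * (2) \<and> xa + 2 * (3) \<noteq> xb \<and> xa + 2 * (3) \<noteq> xb + 2 * (2) \<and> xa + (3) \<noteq> xb + (2)"
    "xa \<noteq> xc \<and> xa \<noteq> xc + 2 * (1) \<and> xa + 2 * (3) \<noteq> xc \<and> xa + 2 * (3) \<noteq> xc + 2 * (1) \<and> xa + (3) \<noteq> xc + (1)"
    "xb \<noteq> xc \<and> xb \<noteq> xc + 2 * (1) \<and> xb + 2 * (2) \<noteq> xc \<and> xb + 2 * (2) \<noteq> xc + 2 * (1) \<and> xb + (2) \<noteq> xc + (1)"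
    "n = 8"
  shows False
  apply (rule lem_8_int[where n="int n" and k="int k" and xa="int xa" and xb="int xb" and xc="int xc"])
   apply simp
  using assms(1) apply simp
  using assms(2) apply simp
  using assms(3) apply simp
  using assms(4) apply simp
  using assms(5) apply simp
  using assms(6) apply simp
  using assms(7) apply simp
  done

lemma lem_12_int:
  fixes n k xa xb xc xd xe :: int
  assumes "0 \<le> k" "1 \<le> xa \<and> xa + 2 * (5) \<le> n"
    "1 \<le> xb \<and> xb + 2 * (4) \<le> n"
    "1 \<le> xc \<and> xc + 2 * (3) \<le> n"
    "1 \<le> xd \<and> xd + 2 * (2) \<le> n"
    "1 \<le> xe \<and> xe + 2 * (1) \<le> n"
    "xa \<noteq> xb \<and> xa \<noteq> xb + 2 * (4) \<and> xa + 2 * (5) \<noteq> xb \<and> xa + 2 * (5) \<noteq> xb + 2 * (4) \<and> xa + (5) \<noteq> xb + (4)"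
    "xa \<noteq> xc \<and> xa \<noteq> xc + 2 * (3) \<and> xa + 2 * (5) \<noteq> xc \<and> xa + 2 * (5) \<noteq> xc + 2 * (3) \<and> xa + (5) \<noteq> xc + (3)"
    "xa \<noteq> xd \<and> xa \<noteq> xd + 2 * (2) \<and> xa + 2 * (5) \<noteq> xd \<and> xa + 2 * (5) \<noteq> xd + 2 * (2) \<and> xa + (5) \<noteq> xd + (2)"
    "xa \<noteq> xe \<and> xa \<noteq> xe + 2 * (1) \<and> xa + 2 * (5) \<noteq> xe \<and> xa + 2 * (5) \<noteq> xe + 2 * (1) \<and> xa + (5) \<noteq> xe + (1)"
    "xb \<noteq> xc \<and> xb \<noteq> xc + 2 * (3) \<and> xb + 2 * (4) \<noteq> xc \<and> xb + 2 * (4) \<noteq> xc + 2 * (3) \<and> xb + (4) \<noteq> xc + (3)"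
    "xb \<noteq> xd \<and> xb \<noteq> xd + 2 * (2) \<and> xb + 2 * (4) \<noteq> xd \<and> xb + 2 * (4) \<noteq> xd + 2 * (2) \<and> xb + (4) \<noteq> xd + (2)"
    "xb \<noteq> xe \<and> xb \<noteq> xe + 2 * (1) \<and> xb + 2 * (4) \<noteq> xe \<and> xb + 2 * (4) \<noteq> xe + 2 * (1) \<and> xb + (4) \<noteq> xe + (1)"
    "xc \<noteq> xd \<and> xc \<noteq> xd + 2 * (2) \<and> xc + 2 * (3) \<noteq> xd \<and> xc + 2 * (3) \<noteq> xd + 2 * (2) \<and> xc + (3) \<noteq> xd + (2)"
    "xc \<noteq> xe \<and> xc \<noteq> xe + 2 * (1) \<and> xc + 2 * (3) \<noteq> xe \<and> xc + 2 * (3) \<noteq> xe + 2 * (1) \<and> xc + (3) \<noteq> xe + (1)"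
    "xd \<noteq> xe \<and> xd \<noteq> xe + 2 * (1) \<and> xd + 2 * (2) \<noteq> xe \<and> xd + 2 * (2) \<noteq> xe + 2 * (1) \<and> xd + (2) \<noteq> xe + (1)"
    "n = 12"
  shows False
  using assms by (smt (z3))

lemma lem_12:
  fixes n k xa xb xc xd xe :: nat
  assumes "1 \<le> xa \<and> xa + 2 * (5) \<le> n"
    "1 \<le> xb \<and> xb + 2 * (4) \<le> n"
    "1 \<le> xc \<and> xc + 2 * (3) \<le> n"
    "1 \<le> xd \<and> xd + 2 * (2) \<le> n"
    "1 \<le> xe \<and> xe + 2 * (1) \<le> n"
    "xa \<noteq> xb \<and> xa \<noteq> xb + 2 * (4) \<and> xa + 2 * (5) \<noteq> xb \<and> xa + 2 * (5) \<noteq> xb + 2 * (4) \<and> xa + (5) \<noteq> xb + (4)"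
    "xa \<noteq> xc \<and> xa \<noteq> xc + 2 * (3) \<and> xa + 2 * (5) \<noteq> xc \<and> xa + 2 * (5) \<noteq> xc + 2 * (3) \<and> xa + (5) \<noteq> xc + (3)"
    "xa \<noteq> xd \<and> xa \<noteq> xd + 2 * (2) \<and> xa + 2 * (5) \<noteq> xd \<and> xa + 2 * (5) \<noteq> xd + 2 * (2) \<and> xa + (5) \<noteq> xd + (2)"
    "xa \<noteq> xe \<and> xa \<noteq> xe + 2 * (1) \<and> xa + 2 * (5) \<noteq> xe \<and> xa + 2 * (5) \<noteq> xe + 2 * (1) \<and> xa + (5) \<noteq> xe + (1)"
    "xb \<noteq> xc \<and> xb \<noteq> xc + 2 * (3) \<and> xb + 2 * (4) \<noteq> xc \<and> xb + 2 * (4) \<noteq> xc + 2 * (3) \<and> xb + (4) \<noteq> xc + (3)"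
    "xb \<noteq> xd \<and> xb \<noteq> xd + 2 * (2) \<and> xb + 2 * (4) \<noteq> xd \<and> xb + 2 * (4) \<noteq> xd + 2 * (2) \<and> xb + (4) \<noteq> xd + (2)"
    "xb \<noteq> xe \<and> xb \<noteq> xe + 2 * (1) \<and> xb + 2 * (4) \<noteq> xe \<and> xb + 2 * (4) \<noteq> xe + 2 * (1) \<and> xb + (4) \<noteq> xe + (1)"
    "xc \<noteq> xd \<and> xc \<noteq> xd + 2 * (2) \<and> xc + 2 * (3) \<noteq> xd \<and> xc + 2 * (3) \<noteq> xd + 2 * (2) \<and> xc + (3) \<noteq> xd + (2)"
    "xc \<noteq> xe \<and> xc \<noteq> xe + 2 * (1) \<and> xc + 2 * (3) \<noteq> xe \<and> xc + 2 * (3) \<noteq> xe + 2 * (1) \<and> xc + (3) \<noteq> xe + (1)"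
    "xd \<noteq> xe \<and> xd \<noteq> xe + 2 * (1) \<and> xd + 2 * (2) \<noteq> xe \<and> xd + 2 * (2) \<noteq> xe + 2 * (1) \<and> xd + (2) \<noteq> xe + (1)"
    "n = 12"
  shows False
  apply (rule lem_12_int[where n="int n" and k="int k" and xa="int xa" and xb="int xb" and xc="int xc" and xd="int xd" and xe="int xe"])
   apply simp
  using assms(1) apply simp
  using assms(2) apply simp
  using assms(3) apply simp
  using assms(4) apply simp
  using assms(5) apply simp
  using assms(6) apply simp
  using assms(7) apply simp
  using assms(8) apply simp
  using assms(9) apply simp
  using assms(10) apply simp
  using assms(11) apply simp
  using assms(12) apply simp
  using assms(13) apply simp
  using assms(14) apply simp
  using assms(15) apply simp
  using assms(16) apply simp
  done

lemma lem_14_int: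
  fixes n k xa xb xc xd xe xf :: int
  assumes "0 \<le> k" "1 \<le> xa \<and> xa + 2 * (6) \<le> n"
    "1 \<le> xb \<and> xb + 2 * (5) \<le> n"
    "1 \<le> xc \<and> xc + 2 * (4) \<le> n"
    "1 \<le> xd \<and> xd + 2 * (3) \<le> n"
    "1 \<le> xe \<and> xe + 2 * (2) \<le> n"
    "1 \<le> xf \<and> xf + 2 * (1) \<le> n"
    "xa \<noteq> xb \<and> xa \<noteq> xb + 2 * (5) \<and> xa + 2 * (6) \<noteq> xb \<and> xa + 2 * (6) \<noteq> xb + 2 * (5) \<and> xa + (6) \<noteq> xb + (5)"
    "xa \<noteq> xc \<and> xa \<noteq> xc + 2 * (4) \<and> xa + 2 * (6) \<noteq> xc \<and> xa + 2 * (6) \<noteq> xc + 2 * (4) \<and> xa + (6) \<noteq> xc + (4)"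
    "xa \<noteq> xd \<and> xa \<noteq> xd + 2 * (3) \<and> xa + 2 * (6) \<noteq> xd \<and> xa + 2 * (6) \<noteq> xd + 2 * (3) \<and> xa + (6) \<noteq> xd + (3)"
    "xa \<noteq> xe \<and> xa \<noteq> xe + 2 * (2) \<and> xa + 2 * (6) \<noteq> xe \<and> xa + 2 * (6) \<noteq> xe + 2 * (2) \<and> xa + (6) \<noteq> xe + (2)"
    "xa \<noteq> xf \<and> xa \<noteq> xf + 2 * (1) \<and> xa + 2 * (6) \<noteq> xf \<and> xa + 2 * (6) \<noteq> xf + 2 * (1) \<and> xa + (6) \<noteq> xf + (1)"
    "xb \<noteq> xc \<and> xb \<noteq> xc + 2 * (4) \<and> xb + 2 * (5) \<noteq> xc \<and> xb + 2 * (5) \<noteq> xc + 2 * (4) \<and> xb + (5) \<noteq> xc + (4)"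
    "xb \<noteq> xd \<and> xb \<noteq> xd + 2 * (3) \<and> xb + 2 * (5) \<noteq> xd \<and> xb + 2 * (5) \<noteq> xd + 2 * (3) \<and> xb + (5) \<noteq> xd + (3)"
    "xb \<noteq> xe \<and> xb \<noteq> xe + 2 * (2) \<and> xb + 2 * (5) \<noteq> xe \<and> xb + 2 * (5) \<noteq> xe + 2 * (2) \<and> xb + (5) \<noteq> xe + (2)"
    "xb \<noteq> xf \<and> xb \<noteq> xf + 2 * (1) \<and> xb + 2 * (5) \<noteq> xf \<and> xb + 2 * (5) \<noteq> xf + 2 * (1) \<and> xb + (5) \<noteq> xf + (1)"
    "xc \<noteq> xd \<and> xc \<noteq> xd + 2 * (3) \<and> xc + 2 * (4) \<noteq> xd \<and> xc + 2 * (4) \<noteq> xd + 2 * (3) \<and> xc + (4) \<noteq> xd + (3)"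
    "xc \<noteq> xe \<and> xc \<noteq> xe + 2 * (2) \<and> xc + 2 * (4) \<noteq> xe \<and> xc + 2 * (4) \<noteq> xe + 2 * (2) \<and> xc + (4) \<noteq> xe + (2)"
    "xc \<noteq> xf \<and> xc \<noteq> xf + 2 * (1) \<and> xc + 2 * (4) \<noteq> xf \<and> xc + 2 * (4) \<noteq> xf + 2 * (1) \<and> xc + (4) \<noteq> xf + (1)"
    "xd \<noteq> xe \<and> xd \<noteq> xe + 2 * (2) \<and> xd + 2 * (3) \<noteq> xe \<and> xd + 2 * (3) \<noteq> xe + 2 * (2) \<and> xd + (3) \<noteq> xe + (2)"
    "xd \<noteq> xf \<and> xd \<noteq> xf + 2 * (1) \<and> xd + 2 * (3) \<noteq> xf \<and> xd + 2 * (3) \<noteq> xf + 2 * (1) \<and> xd + (3) \<noteq> xf + (1)"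
    "xe \<noteq> xf \<and> xe \<noteq> xf + 2 * (1) \<and> xe + 2 * (2) \<noteq> xf \<and> xe + 2 * (2) \<noteq> xf + 2 * (1) \<and> xe + (2) \<noteq> xf + (1)"
    "n = 14"
  shows False
  using assms by (smt (z3))

lemma lem_14:
  fixes n k xa xb xc xd xe xf :: nat
  assumes "1 \<le> xa \<and> xa + 2 * (6) \<le> n"
    "1 \<le> xb \<and> xb + 2 * (5) \<le> n"
    "1 \<le> xc \<and> xc + 2 * (4) \<le> n"
    "1 \<le> xd \<and> xd + 2 * (3) \<le> n"
    "1 \<le> xe \<and> xe + 2 * (2) \<le> n"
    "1 \<le> xf \<and> xf + 2 * (1) \<le> n"
    "xa \<noteq> xb \<and> xa \<noteq> xb + 2 * (5) \<and> xa + 2 * (6) \<noteq> xb \<and> xa + 2 * (6) \<noteq> xb + 2 * (5) \<and> xa + (6) \<noteq> xb + (5)"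
    "xa \<noteq> xc \<and> xa \<noteq> xc + 2 * (4) \<and> xa + 2 * (6) \<noteq> xc \<and> xa + 2 * (6) \<noteq> xc + 2 * (4) \<and> xa + (6) \<noteq> xc + (4)"
    "xa \<noteq> xd \<and> xa \<noteq> xd + 2 * (3) \<and> xa + 2 * (6) \<noteq> xd \<and> xa + 2 * (6) \<noteq> xd + 2 * (3) \<and> xa + (6) \<noteq> xd + (3)"
    "xa \<noteq> xe \<and> xa \<noteq> xe + 2 * (2) \<and> xa + 2 * (6) \<noteq> xe \<and> xa + 2 * (6) \<noteq> xe + 2 * (2) \<and> xa + (6) \<noteq> xe + (2)"
    "xa \<noteq> xf \<and> xa \<noteq> xf + 2 * (1) \<and> xa + 2 * (6) \<noteq> xf \<and> xa + 2 * (6) \<noteq> xf + 2 * (1) \<and> xa + (6) \<noteq> xf + (1)"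
    "xb \<noteq> xc \<and> xb \<noteq> xc + 2 * (4) \<and> xb + 2 * (5) \<noteq> xc \<and> xb + 2 * (5) \<noteq> xc + 2 * (4) \<and> xb + (5) \<noteq> xc + (4)"
    "xb \<noteq> xd \<and> xb \<noteq> xd + 2 * (3) \<and> xb + 2 * (5) \<noteq> xd \<and> xb + 2 * (5) \<noteq> xd + 2 * (3) \<and> xb + (5) \<noteq> xd + (3)"
    "xb \<noteq> xe \<and> xb \<noteq> xe + 2 * (2) \<and> xb + 2 * (5) \<noteq> xe \<and> xb + 2 * (5) \<noteq> xe + 2 * (2) \<and> xb + (5) \<noteq> xe + (2)"
    "xb \<noteq> xf \<and> xb \<noteq> xf + 2 * (1) \<and> xb + 2 * (5) \<noteq> xf \<and> xb + 2 * (5) \<noteq> xf + 2 * (1) \<and> xb + (5) \<noteq> xf + (1)"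
    "xc \<noteq> xd \<and> xc \<noteq> xd + 2 * (3) \<and> xc + 2 * (4) \<noteq> xd \<and> xc + 2 * (4) \<noteq> xd + 2 * (3) \<and> xc + (4) \<noteq> xd + (3)"
    "xc \<noteq> xe \<and> xc \<noteq> xe + 2 * (2) \<and> xc + 2 * (4) \<noteq> xe \<and> xc + 2 * (4) \<noteq> xe + 2 * (2) \<and> xc + (4) \<noteq> xe + (2)"
    "xc \<noteq> xf \<and> xc \<noteq> xf + 2 * (1) \<and> xc + 2 * (4) \<noteq> xf \<and> xc + 2 * (4) \<noteq> xf + 2 * (1) \<and> xc + (4) \<noteq> xf + (1)"
    "xd \<noteq> xe \<and> xd \<noteq> xe + 2 * (2) \<and> xd + 2 * (3) \<noteq> xe \<and> xd + 2 * (3) \<noteq> xe + 2 * (2) \<and> xd + (3) \<noteq> xe + (2)"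
    "xd \<noteq> xf \<and> xd \<noteq> xf + 2 * (1) \<and> xd + 2 * (3) \<noteq> xf \<and> xd + 2 * (3) \<noteq> xf + 2 * (1) \<and> xd + (3) \<noteq> xf + (1)"
    "xe \<noteq> xf \<and> xe \<noteq> xf + 2 * (1) \<and> xe + 2 * (2) \<noteq> xf \<and> xe + 2 * (2) \<noteq> xf + 2 * (1) \<and> xe + (2) \<noteq> xf + (1)"
    "n = 14"
  shows False
  apply (rule lem_14_int[where n="int n" and k="int k" and xa="int xa" and xb="int xb" and xc="int xc" and xd="int xd" and xe="int xe" and xf="int xf"])
   apply simp
  using assms(1) apply simp
  using assms(2) apply simp
  using assms(3) apply simp
  using assms(4) apply simp
  using assms(5) apply simp
  using assms(6) apply simp
  using assms(7) apply simp
  using assms(8) apply simp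
  using assms(9) apply simp
  using assms(10) apply simp
  using assms(11) apply simp
  using assms(12) apply simp
  using assms(13) apply simp
  using assms(14) apply simp
  using assms(15) apply simp
  using assms(16) apply simp
  using assms(17) apply simp
  using assms(18) apply simp
  using assms(19) apply simp
  using assms(20) apply simp
  using assms(21) apply simp
  using assms(22) apply simp
  done

lemma lem_big_int:
  fixes n k xa xb xc xd xe xf xg :: int
  assumes "0 \<le> k" "1 \<le> xa \<and> xa + 2 * (k+7) \<le> n"
    "1 \<le> xb \<and> xb + 2 * (k+6) \<le> n"
    "1 \<le> xc \<and> xc + 2 * (k+5) \<le> n"
    "1 \<le> xd \<and> xd + 2 * (k+4) \<le> n"
    "1 \<le> xe \<and> xe + 2 * (k+3) \<le> n"
    "1 \<le> xf \<and> xf + 2 * (k+2) \<le> n"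
    "1 \<le> xg \<and> xg + 2 * (k+1) \<le> n"
    "xa \<noteq> xb \<and> xa \<noteq> xb + 2 * (k+6) \<and> xa + 2 * (k+7) \<noteq> xb \<and> xa + 2 * (k+7) \<noteq> xb + 2 * (k+6) \<and> xa + (k+7) \<noteq> xb + (k+6)"
    "xa \<noteq> xc \<and> xa \<noteq> xc + 2 * (k+5) \<and> xa + 2 * (k+7) \<noteq> xc \<and> xa + 2 * (k+7) \<noteq> xc + 2 * (k+5) \<and> xa + (k+7) \<noteq> xc + (k+5)"
    "xa \<noteq> xd \<and> xa \<noteq> xd + 2 * (k+4) \<and> xa + 2 * (k+7) \<noteq> xd \<and> xa + 2 * (k+7) \<noteq> xd + 2 * (k+4) \<and> xa + (k+7) \<noteq> xd + (k+4)"
    "xa \<noteq> xe \<and> xa \<noteq> xe + 2 * (k+3) \<and> xa + 2 * (k+7) \<noteq> xe \<and> xa + 2 * (k+7) \<noteq> xe + 2 * (k+3) \<and> xa + (k+7) \<noteq> xe + (k+3)"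
    "xa \<noteq> xf \<and> xa \<noteq> xf + 2 * (k+2) \<and> xa + 2 * (k+7) \<noteq> xf \<and> xa + 2 * (k+7) \<noteq> xf + 2 * (k+2) \<and> xa + (k+7) \<noteq> xf + (k+2)"
    "xa \<noteq> xg \<and> xa \<noteq> xg + 2 * (k+1) \<and> xa + 2 * (k+7) \<noteq> xg \<and> xa + 2 * (k+7) \<noteq> xg + 2 * (k+1) \<and> xa + (k+7) \<noteq> xg + (k+1)"
    "xb \<noteq> xc \<and> xb \<noteq> xc + 2 * (k+5) \<and> xb + 2 * (k+6) \<noteq> xc \<and> xb + 2 * (k+6) \<noteq> xc + 2 * (k+5) \<and> xb + (k+6) \<noteq> xc + (k+5)"
    "xb \<noteq> xd \<and> xb \<noteq> xd + 2 * (k+4) \<and> xb + 2 * (k+6) \<noteq> xd \<and> xb + 2 * (k+6) \<noteq> xd + 2 * (k+4) \<and> xb + (k+6) \<noteq> xd + (k+4)"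
    "xb \<noteq> xe \<and> xb \<noteq> xe + 2 * (k+3) \<and> xb + 2 * (k+6) \<noteq> xe \<and> xb + 2 * (k+6) \<noteq> xe + 2 * (k+3) \<and> xb + (k+6) \<noteq> xe + (k+3)"
    "xb \<noteq> xf \<and> xb \<noteq> xf + 2 * (k+2) \<and> xb + 2 * (k+6) \<noteq> xf \<and> xb + 2 * (k+6) \<noteq> xf + 2 * (k+2) \<and> xb + (k+6) \<noteq> xf + (k+2)"
    "xb \<noteq> xg \<and> xb \<noteq> xg + 2 * (k+1) \<and> xb + 2 * (k+6) \<noteq> xg \<and> xb + 2 * (k+6) \<noteq> xg + 2 * (k+1) \<and> xb + (k+6) \<noteq> xg + (k+1)"
    "xc \<noteq> xd \<and> xc \<noteq> xd + 2 * (k+4) \<and> xc + 2 * (k+5) \<noteq> xd \<and> xc + 2 * (k+5) \<noteq> xd + 2 * (k+4) \<and> xc + (k+5) \<noteq> xd + (k+4)"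
    "xc \<noteq> xe \<and> xc \<noteq> xe + 2 * (k+3) \<and> xc + 2 * (k+5) \<noteq> xe \<and> xc + 2 * (k+5) \<noteq> xe + 2 * (k+3) \<and> xc + (k+5) \<noteq> xe + (k+3)"
    "xc \<noteq> xf \<and> xc \<noteq> xf + 2 * (k+2) \<and> xc + 2 * (k+5) \<noteq> xf \<and> xc + 2 * (k+5) \<noteq> xf + 2 * (k+2) \<and> xc + (k+5) \<noteq> xf + (k+2)"
    "xc \<noteq> xg \<and> xc \<noteq> xg + 2 * (k+1) \<and> xc + 2 * (k+5) \<noteq> xg \<and> xc + 2 * (k+5) \<noteq> xg + 2 * (k+1) \<and> xc + (k+5) \<noteq> xg + (k+1)"
    "xd \<noteq> xe \<and> xd \<noteq> xe + 2 * (k+3) \<and> xd + 2 * (k+4) \<noteq> xe \<and> xd + 2 * (k+4) \<noteq> xe + 2 * (k+3) \<and> xd + (k+4) \<noteq> xe + (k+3)"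
    "xd \<noteq> xf \<and> xd \<noteq> xf + 2 * (k+2) \<and> xd + 2 * (k+4) \<noteq> xf \<and> xd + 2 * (k+4) \<noteq> xf + 2 * (k+2) \<and> xd + (k+4) \<noteq> xf + (k+2)"
    "xd \<noteq> xg \<and> xd \<noteq> xg + 2 * (k+1) \<and> xd + 2 * (k+4) \<noteq> xg \<and> xd + 2 * (k+4) \<noteq> xg + 2 * (k+1) \<and> xd + (k+4) \<noteq> xg + (k+1)"
    "xe \<noteq> xf \<and> xe \<noteq> xf + 2 * (k+2) \<and> xe + 2 * (k+3) \<noteq> xf \<and> xe + 2 * (k+3) \<noteq> xf + 2 * (k+2) \<and> xe + (k+3) \<noteq> xf + (k+2)"
    "xe \<noteq> xg \<and> xe \<noteq> xg + 2 * (k+1) \<and> xe + 2 * (k+3) \<noteq> xg \<and> xe + 2 * (k+3) \<noteq> xg + 2 * (k+1) \<and> xe + (k+3) \<noteq> xg + (k+1)"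
    "xf \<noteq> xg \<and> xf \<noteq> xg + 2 * (k+1) \<and> xf + 2 * (k+2) \<noteq> xg \<and> xf + 2 * (k+2) \<noteq> xg + 2 * (k+1) \<and> xf + (k+2) \<noteq> xg + (k+1)"
    "n = 2 * k + 16"
  shows False
  using assms by (smt (z3))

lemma lem_big:
  fixes n k xa xb xc xd xe xf xg :: nat
  assumes "1 \<le> xa \<and> xa + 2 * (k+7) \<le> n"
    "1 \<le> xb \<and> xb + 2 * (k+6) \<le> n"
    "1 \<le> xc \<and> xc + 2 * (k+5) \<le> n"
    "1 \<le> xd \<and> xd + 2 * (k+4) \<le> n"
    "1 \<le> xe \<and> xe + 2 * (k+3) \<le> n"
    "1 \<le> xf \<and> xf + 2 * (k+2) \<le> n"
    "1 \<le> xg \<and> xg + 2 * (k+1) \<le> n"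
    "xa \<noteq> xb \<and> xa \<noteq> xb + 2 * (k+6) \<and> xa + 2 * (k+7) \<noteq> xb \<and> xa + 2 * (k+7) \<noteq> xb + 2 * (k+6) \<and> xa + (k+7) \<noteq> xb + (k+6)"
    "xa \<noteq> xc \<and> xa \<noteq> xc + 2 * (k+5) \<and> xa + 2 * (k+7) \<noteq> xc \<and> xa + 2 * (k+7) \<noteq> xc + 2 * (k+5) \<and> xa + (k+7) \<noteq> xc + (k+5)"
    "xa \<noteq> xd \<and> xa \<noteq> xd + 2 * (k+4) \<and> xa + 2 * (k+7) \<noteq> xd \<and> xa + 2 * (k+7) \<noteq> xd + 2 * (k+4) \<and> xa + (k+7) \<noteq> xd + (k+4)"
    "xa \<noteq> xe \<and> xa \<noteq> xe + 2 * (k+3) \<and> xa + 2 * (k+7) \<noteq> xe \<and> xa + 2 * (k+7) \<noteq> xe + 2 * (k+3) \<and> xa + (k+7) \<noteq> xe + (k+3)"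
    "xa \<noteq> xf \<and> xa \<noteq> xf + 2 * (k+2) \<and> xa + 2 * (k+7) \<noteq> xf \<and> xa + 2 * (k+7) \<noteq> xf + 2 * (k+2) \<and> xa + (k+7) \<noteq> xf + (k+2)"
    "xa \<noteq> xg \<and> xa \<noteq> xg + 2 * (k+1) \<and> xa + 2 * (k+7) \<noteq> xg \<and> xa + 2 * (k+7) \<noteq> xg + 2 * (k+1) \<and> xa + (k+7) \<noteq> xg + (k+1)"
    "xb \<noteq> xc \<and> xb \<noteq> xc + 2 * (k+5) \<and> xb + 2 * (k+6) \<noteq> xc \<and> xb + 2 * (k+6) \<noteq> xc + 2 * (k+5) \<and> xb + (k+6) \<noteq> xc + (k+5)"
    "xb \<noteq> xd \<and> xb \<noteq> xd + 2 * (k+4) \<and> xb + 2 * (k+6) \<noteq> xd \<and> xb + 2 * (k+6) \<noteq> xd + 2 * (k+4) \<and> xb + (k+6) \<noteq> xd + (k+4)"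
    "xb \<noteq> xe \<and> xb \<noteq> xe + 2 * (k+3) \<and> xb + 2 * (k+6) \<noteq> xe \<and> xb + 2 * (k+6) \<noteq> xe + 2 * (k+3) \<and> xb + (k+6) \<noteq> xe + (k+3)"
    "xb \<noteq> xf \<and> xb \<noteq> xf + 2 * (k+2) \<and> xb + 2 * (k+6) \<noteq> xf \<and> xb + 2 * (k+6) \<noteq> xf + 2 * (k+2) \<and> xb + (k+6) \<noteq> xf + (k+2)"
    "xb \<noteq> xg \<and> xb \<noteq> xg + 2 * (k+1) \<and> xb + 2 * (k+6) \<noteq> xg \<and> xb + 2 * (k+6) \<noteq> xg + 2 * (k+1) \<and> xb + (k+6) \<noteq> xg + (k+1)"
    "xc \<noteq> xd \<and> xc \<noteq> xd + 2 * (k+4) \<and> xc + 2 * (k+5) \<noteq> xd \<and> xc + 2 * (k+5) \<noteq> xd + 2 * (k+4) \<and> xc + (k+5) \<noteq> xd + (k+4)"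
    "xc \<noteq> xe \<and> xc \<noteq> xe + 2 * (k+3) \<and> xc + 2 * (k+5) \<noteq> xe \<and> xc + 2 * (k+5) \<noteq> xe + 2 * (k+3) \<and> xc + (k+5) \<noteq> xe + (k+3)"
    "xc \<noteq> xf \<and> xc \<noteq> xf + 2 * (k+2) \<and> xc + 2 * (k+5) \<noteq> xf \<and> xc + 2 * (k+5) \<noteq> xf + 2 * (k+2) \<and> xc + (k+5) \<noteq> xf + (k+2)"
    "xc \<noteq> xg \<and> xc \<noteq> xg + 2 * (k+1) \<and> xc + 2 * (k+5) \<noteq> xg \<and> xc + 2 * (k+5) \<noteq> xg + 2 * (k+1) \<and> xc + (k+5) \<noteq> xg + (k+1)"
    "xd \<noteq> xe \<and> xd \<noteq> xe + 2 * (k+3) \<and> xd + 2 * (k+4) \<noteq> xe \<and> xd + 2 * (k+4) \<noteq> xe + 2 * (k+3) \<and> xd + (k+4) \<noteq> xe + (k+3)"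
    "xd \<noteq> xf \<and> xd \<noteq> xf + 2 * (k+2) \<and> xd + 2 * (k+4) \<noteq> xf \<and> xd + 2 * (k+4) \<noteq> xf + 2 * (k+2) \<and> xd + (k+4) \<noteq> xf + (k+2)"
    "xd \<noteq> xg \<and> xd \<noteq> xg + 2 * (k+1) \<and> xd + 2 * (k+4) \<noteq> xg \<and> xd + 2 * (k+4) \<noteq> xg + 2 * (k+1) \<and> xd + (k+4) \<noteq> xg + (k+1)"
    "xe \<noteq> xf \<and> xe \<noteq> xf + 2 * (k+2) \<and> xe + 2 * (k+3) \<noteq> xf \<and> xe + 2 * (k+3) \<noteq> xf + 2 * (k+2) \<and> xe + (k+3) \<noteq> xf + (k+2)"
    "xe \<noteq> xg \<and> xe \<noteq> xg + 2 * (k+1) \<and> xe + 2 * (k+3) \<noteq> xg \<and> xe + 2 * (k+3) \<noteq> xg + 2 * (k+1) \<and> xe + (k+3) \<noteq> xg + (k+1)"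
    "xf \<noteq> xg \<and> xf \<noteq> xg + 2 * (k+1) \<and> xf + 2 * (k+2) \<noteq> xg \<and> xf + 2 * (k+2) \<noteq> xg + 2 * (k+1) \<and> xf + (k+2) \<noteq> xg + (k+1)"
    "n = 2 * k + 16"
  shows False
  apply (rule lem_big_int[where n="int n" and k="int k" and xa="int xa" and xb="int xb" and xc="int xc" and xd="int xd" and xe="int xe" and xf="int xf" and xg="int xg"])
   apply simp
  using assms(1) apply simp
  using assms(2) apply simp
  using assms(3) apply simp
  using assms(4) apply simp
  using assms(5) apply simp
  using assms(6) apply simp
  using assms(7) apply simp
  using assms(8) apply simp
  using assms(9) apply simp
  using assms(10) apply simp
  using assms(11) apply simp
  using assms(12) apply simp
  using assms(13) apply simp
  using assms(14) apply simp
  using assms(15) apply simp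
  using assms(16) apply simp
  using assms(17) apply simp
  using assms(18) apply simp
  using assms(19) apply simp
  using assms(20) apply simp
  using assms(21) apply simp
  using assms(22) apply simp
  using assms(23) apply simp
  using assms(24) apply simp
  using assms(25) apply simp
  using assms(26) apply simp
  using assms(27) apply simp
  using assms(28) apply simp
  using assms(29) apply simp
  done

lemma chain_contra:
  fixes n h :: nat and c lo f :: "nat \<Rightarrow> nat"
  assumes H: "\<forall>l\<in>{1..h}. 1 \<le> lo l \<and> c l = lo l + l \<and> lo l + 2 * l \<le> n \<and> f (lo l) = c l \<and> f (lo l + 2 * l) = c l"
    and D: "\<forall>l\<in>{1..h}. \<forall>l'\<in>{1..h}. l \<noteq> l' \<longrightarrow> c l \<noteq> c l'"
    and hn: "h = (n - 1) div 2" and n: "n \<ge> 5" "n \<noteq> 6" "n \<noteq> 10"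
  shows False
proof -
  let ?P = "\<lambda>l. 1 \<le> lo l \<and> c l = lo l + l \<and> lo l + 2 * l \<le> n \<and> f (lo l) = c l \<and> f (lo l + 2 * l) = c l"
  have Pl: "?P l" if "1 \<le> l" "l \<le> h" for l using H that by (meson atLeastAtMost_iff)
  have Dl: "c l \<noteq> c l'" if "1 \<le> l" "l \<le> h" "1 \<le> l'" "l' \<le> h" "l \<noteq> l'" for l l'
    using D that by (meson atLeastAtMost_iff)
  let ?Q = "\<lambda>l l'. lo l \<noteq> lo l' \<and> lo l \<noteq> lo l' + 2 * l' \<and> lo l + 2 * l \<noteq> lo l' \<and> lo l + 2 * l \<noteq> lo l' + 2 * l'
     \<and> lo l + l \<noteq> lo l' + l'"
  have Q: "?Q l l'"
    if "1 \<le> l" "l \<le> h" "1 \<le> l'" "l' \<le> h" "l \<noteq> l'" for l l'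
  proof -
    have "?P l" "?P l'" "c l \<noteq> c l'" using Pl Dl that by auto
    then show ?thesis by metis
  qed
  let ?R = "\<lambda>l. 1 \<le> lo l \<and> lo l + 2 * l \<le> n"
  have Rl: "?R l" if "1 \<le> l" "l \<le> h" for l using Pl[OF that] by blast
  consider (odd) "odd n" | (e8) "n = 8" | (e12) "n = 12" | (e14) "n = 14" | (big) "even n" "n \<ge> 16"
  proof -
    have "odd n \<or> n = 8 \<or> n = 12 \<or> n = 14 \<or> (even n \<and> n \<ge> 16)"
      using n by presburger
    then show ?thesis using that by blast
  qed
  then show False
  proof cases
    case odd
    define k where "k = (n - 5) div 2"
    have k: "h = k + 2" "n = 2 * k + 5" unfolding k_def using odd hn n by presburger+
    have RR: "?R (k+2)" "?R (k+1)"
      by (rule Rl; use k in simp)+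
    have QQ: "?Q (k+2) (k+1)"
      by (rule Q; use k in simp)+
    show False by (rule lem_odd[OF RR QQ k(2)])
  next
    case e8
    then have h: "h = 3" using hn by simp
    have RR: "?R (3)" "?R (2)" "?R (1)"
      by (rule Rl; use h in simp)+
    have QQ: "?Q (3) (2)" "?Q (3) (1)" "?Q (2) (1)"
      by (rule Q; use h in simp)+
    show False by (rule lem_8[OF RR QQ e8])
  next
    case e12
    then have h: "h = 5" using hn by simp
    have RR: "?R (5)" "?R (4)" "?R (3)" "?R (2)" "?R (1)"
      by (rule Rl; use h in simp)+
    have QQ: "?Q (5) (4)" "?Q (5) (3)" "?Q (5) (2)" "?Q (5) (1)" "?Q (4) (3)" "?Q (4) (2)" "?Q (4) (1)" "?Q (3) (2)" "?Q (3) (1)" "?Q (2) (1)"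
      by (rule Q; use h in simp)+
    show False by (rule lem_12[OF RR QQ e12])
  next
    case e14
    then have h: "h = 6" using hn by simp
    have RR: "?R (6)" "?R (5)" "?R (4)" "?R (3)" "?R (2)" "?R (1)"
      by (rule Rl; use h in simp)+
    have QQ: "?Q (6) (5)" "?Q (6) (4)" "?Q (6) (3)" "?Q (6) (2)" "?Q (6) (1)" "?Q (5) (4)" "?Q (5) (3)" "?Q (5) (2)" "?Q (5) (1)" "?Q (4) (3)" "?Q (4) (2)" "?Q (4) (1)" "?Q (3) (2)" "?Q (3) (1)" "?Q (2) (1)"
      by (rule Q; use h in simp)+
    show False by (rule lem_14[OF RR QQ e14])
  next
    case big
    define k where "k = (n - 16) div 2"
    have k: "h = k + 7" "n = 2 * k + 16" unfolding k_def using big hn by presburger+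
    have RR: "?R (k+7)" "?R (k+6)" "?R (k+5)" "?R (k+4)" "?R (k+3)" "?R (k+2)" "?R (k+1)"
      by (rule Rl; use k in simp)+
    have QQ: "?Q (k+7) (k+6)" "?Q (k+7) (k+5)" "?Q (k+7) (k+4)" "?Q (k+7) (k+3)" "?Q (k+7) (k+2)" "?Q (k+7) (k+1)" "?Q (k+6) (k+5)" "?Q (k+6) (k+4)" "?Q (k+6) (k+3)" "?Q (k+6) (k+2)" "?Q (k+6) (k+1)" "?Q (k+5) (k+4)" "?Q (k+5) (k+3)" "?Q (k+5) (k+2)" "?Q (k+5) (k+1)" "?Q (k+4) (k+3)" "?Q (k+4) (k+2)" "?Q (k+4) (k+1)" "?Q (k+3) (k+2)" "?Q (k+3) (k+1)" "?Q (k+2) (k+1)"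
      by (rule Q; use k in simp)+
    show False by (rule lem_big[OF RR QQ k(2)])
  qed
qed



definition Inv :: "nat \<Rightarrow> nat set \<Rightarrow> (nat \<Rightarrow> nat) \<Rightarrow> bool" where
  "Inv n S lam \<longleftrightarrow> S \<subseteq> {1..n} \<and> inj_on lam S \<and> (\<forall>u\<in>{1..n}. \<exists>v\<in>S. u + lam v = v \<or> u = v + lam v)
     \<and> (\<exists>v\<in>S. lam v = 0) \<and> (\<forall>v\<in>S. lam v \<le> n) \<and> (\<exists>v\<in>S. lam v = v)"

lemma Inv4: "Inv 4 {1,2,3,4} (\<lambda>x. if x = 1 then 1 else if x = 2 then 2 else if x = 3 then 0 else 3)"
proof -
  have e: "{1..4::nat} = {1,2,3,4}" by auto
  show ?thesis unfolding Inv_def e by (auto simp: inj_on_def)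
qed

lemma Inv5: "Inv 5 {1,2,4,5} (\<lambda>x. if x = 1 then 0 else if x = 2 then 2 else if x = 4 then 1 else 3)"
proof -
  have e: "{1..5::nat} = {1,2,3,4,5}" by auto
  show ?thesis unfolding Inv_def e by (auto simp: inj_on_def)
qed

lemma Inv_step:
  assumes "Inv n S lam"
  shows "Inv (n + 2) (Suc ` S \<union> {1, n + 2}) (\<lambda>x. if x = 1 then n + 1 else if x = n + 2 then n + 2 else lam (x - 1))"
    (is "Inv _ ?S ?l")
proof -
  have SV: "S \<subseteq> {1..n}" and inj: "inj_on lam S"
    and cov: "\<forall>u\<in>{1..n}. \<exists>v\<in>S. u + lam v = v \<or> u = v + lam v"
    and z: "\<exists>v\<in>S. lam v = 0" and bd: "\<forall>v\<in>S. lam v \<le> n" and w: "\<exists>v\<in>S. lam v = v"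
    using assms unfolding Inv_def by auto
  have lS: "?l (Suc v) = lam v" if "v \<in> S" for v using that SV by auto
  have sub: "?S \<subseteq> {1..n+2}" using SV by auto
  have inj': "inj_on ?l ?S"
  proof (rule inj_onI)
    fix x y assume xy: "x \<in> ?S" "y \<in> ?S" "?l x = ?l y"
    show "x = y"
    proof (cases "x \<in> Suc ` S")
      case True
      then obtain a where a: "a \<in> S" "x = Suc a" by auto
      have x1: "x \<noteq> 1 \<and> x \<noteq> n + 2" using a SV by auto
      show ?thesis
      proof (cases "y \<in> Suc ` S")
        case True
        then obtain b where b: "b \<in> S" "y = Suc b" by auto
        have "lam a = lam b" by (metis a b lS xy(3))
        then show ?thesis using inj a b by (simp add: inj_on_def)
      next
        case False
        then have "y = 1 \<or> y = n + 2" using xy by auto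
        then show ?thesis using xy(3) lS[OF a(1)] a x1 bd by auto
      qed
    next
      case False
      then have xx: "x = 1 \<or> x = n + 2" using xy by auto
      show ?thesis
      proof (cases "y \<in> Suc ` S")
        case True
        then obtain b where b: "b \<in> S" "y = Suc b" by auto
        have "y \<noteq> 1 \<and> y \<noteq> n + 2" using b SV by auto
        then show ?thesis using xy(3) lS[OF b(1)] b xx bd by auto
      next
        case False
        then have "y = 1 \<or> y = n + 2" using xy by auto
        then show ?thesis using xx xy(3) by auto
      qed
    qed
  qed
  have cov': "\<forall>u\<in>{1..n+2}. \<exists>v\<in>?S. u + ?l v = v \<or> u = v + ?l v"
  proof
    fix u assume u: "u \<in> {1..n+2}"
    consider "u = 1" | "u = n + 2" | "u - 1 \<in> {1..n}" using u by fastforce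
    then show "\<exists>v\<in>?S. u + ?l v = v \<or> u = v + ?l v"
    proof cases
      case 1
      obtain v where v: "v \<in> S" "lam v = v" using w by auto
      then show ?thesis using 1 lS[OF v(1)] by (intro bexI[of _ "Suc v"]) auto
    next
      case 2
      show ?thesis using 2 by (intro bexI[of _ 1]) auto
    next
      case 3
      then obtain v where v: "v \<in> S" "u - 1 + lam v = v \<or> u - 1 = v + lam v" using cov by blast
      then show ?thesis using u lS[OF v(1)] by (intro bexI[of _ "Suc v"]) auto
    qed
  qed
  have z': "\<exists>v\<in>?S. ?l v = 0"
  proof -
    obtain v where v: "v \<in> S" "lam v = 0" using z by auto
    then show ?thesis using lS[OF v(1)] by (intro bexI[of _ "Suc v"]) auto
  qed
  have bd': "\<forall>v\<in>?S. ?l v \<le> n + 2" using bd lS by auto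
  have w': "\<exists>v\<in>?S. ?l v = v" by (intro bexI[of _ "n+2"]) auto
  show ?thesis unfolding Inv_def using sub inj' cov' z' bd' w' by blast
qed

lemma Inv_exists: "n \<ge> 4 \<Longrightarrow> \<exists>S lam. Inv n S lam"
proof (induction n rule: less_induct)
  case (less n)
  show ?case
  proof (cases "n \<le> 5")
    case True
    then have "n = 4 \<or> n = 5" using less.prems by auto
    then show ?thesis using Inv4 Inv5 by blast
  next
    case False
    have "n - 2 < n" "4 \<le> n - 2" using False by auto
    then obtain S lam where "Inv (n - 2) S lam" using less.IH by blast
    then have "\<exists>S lam. Inv (n - 2 + 2) S lam" using Inv_step by blast
    moreover have "n - 2 + 2 = n" using False by simp
    ultimately show ?thesis by simp
  qed
qed

lemma lower_bound:
  fixes S :: "nat set" and lam :: "nat \<Rightarrow> nat"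
  assumes SV: "S \<subseteq> {1..n}" and inj: "inj_on lam S"
    and cov: "\<forall>u\<in>{1..n}. \<exists>v\<in>S. u + lam v = v \<or> u = v + lam v"
    and z: "\<exists>v\<in>S. lam v = 0" and n: "n \<ge> 4" "n \<noteq> 6" "n \<noteq> 10"
  shows "n + 3 \<le> 2 * card S"
proof (rule ccontr)
  assume "\<not> ?thesis"
  then have small: "card S + (n - 1) div 2 \<le> n" using n by presburger
  obtain f where fS: "\<forall>u\<in>{1..n}. f u \<in> S \<and> (u + lam (f u) = f u \<or> u = f u + lam (f u))"
    using cov by metis
  note cs = core_struct[OF SV inj fS small]
  obtain C LO where CL: "\<forall>l\<in>{1..(n - 1) div 2}. C l \<in> S \<and> lam (C l) = l \<and> 1 \<le> LO l \<and> C l = LO l + l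
     \<and> LO l + 2 * l \<le> n \<and> f (LO l) = C l \<and> f (LO l + 2 * l) = C l"
    using cs(1) by metis
  have H: "\<forall>l\<in>{1..(n - 1) div 2}. 1 \<le> LO l \<and> C l = LO l + l \<and> LO l + 2 * l \<le> n \<and> f (LO l) = C l \<and> f (LO l + 2 * l) = C l"
    using CL by blast
  have D: "\<forall>l\<in>{1..(n - 1) div 2}. \<forall>l'\<in>{1..(n - 1) div 2}. l \<noteq> l' \<longrightarrow> C l \<noteq> C l'"
    using CL by metis
  show False
  proof (cases "n = 4")
    case False
    then show False using chain_contra[OF H D refl] n by simp
  next
    case True
    have c1: "C 1 \<in> S" "lam (C 1) = 1" "1 \<le> LO 1" "C 1 = LO 1 + 1" "LO 1 + 2 \<le> 4"
      "f (LO 1) = C 1" "f (LO 1 + 2) = C 1" using CL True by auto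
    obtain zz where zz: "zz \<in> S" "lam zz = 0" using z by blast
    have fz: "f zz = zz" using cs(2) zz by blast
    have injS: "\<And>a b. a \<in> S \<Longrightarrow> b \<in> S \<Longrightarrow> lam a = lam b \<Longrightarrow> a = b"
      using inj by (auto simp: inj_on_def)
    have zV: "zz \<in> {1..4}" using zz SV True by auto
    have fy: "f (LO 1 + 1) \<in> S \<and> (LO 1 + 1 + lam (f (LO 1 + 1)) = f (LO 1 + 1) \<or> LO 1 + 1 = f (LO 1 + 1) + lam (f (LO 1 + 1)))"
    proof -
      have "LO 1 + 1 \<in> {1..n}" using c1 True by auto
      then show ?thesis using fS by blast
    qed
    have yV: "f (LO 1 + 1) \<in> {1..4}" using fy SV True by auto
    have zc: "zz \<noteq> C 1" using zz c1 by auto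
    have zlo: "zz \<noteq> LO 1" "zz \<noteq> LO 1 + 2" using fz c1 zc by auto
    define y where "y = f (LO 1 + 1)"
    have yS: "y \<in> S" and ye: "LO 1 + 1 + lam y = y \<or> LO 1 + 1 = y + lam y" using fy unfolding y_def by auto
    have y4: "y = 1 \<or> y = 2 \<or> y = 3 \<or> y = 4" using yV unfolding y_def by auto
    have yl1: "y \<noteq> C 1" using ye c1 by auto
    have ylam1: "lam y \<noteq> 1" using injS[OF yS c1(1)] yl1 c1(2) by auto
    have yz: "lam y = 0 \<Longrightarrow> y = zz" using injS[OF yS zz(1)] zz(2) by auto
    consider "LO 1 = 1" | "LO 1 = 2" using c1 by linarith
    then show False
    proof cases
      case 1
      then have z4: "zz = 4" using zV zc zlo c1 by auto
      show False using y4 ye ylam1 yz z4 zz(2) yl1 c1(4) 1 by auto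
    next
      case 2
      then have z1: "zz = 1" using zV zc zlo c1 by auto
      show False using y4 ye ylam1 yz z1 zz(2) yl1 c1(4) 2 by auto
    qed
  qed
qed

lemma ext_iff:
  "ext_irr_dom_set (path_V n) (path_E n) S lam \<longleftrightarrow>
    S \<subseteq> {1..n} \<and> inj_on lam S \<and> (\<forall>u\<in>{1..n}. \<exists>v\<in>S. u + lam v = v \<or> u = v + lam v) \<and> (\<exists>v\<in>S. lam v = 0)"
proof
  assume a: "ext_irr_dom_set (path_V n) (path_E n) S lam"
  then have S: "S \<subseteq> {1..n}" unfolding ext_irr_dom_set_def path_V_def by auto
  have "\<forall>u\<in>{1..n}. \<exists>v\<in>S. u + lam v = v \<or> u = v + lam v"
  proof
    fix u assume u: "u \<in> {1..n}"
    have "\<forall>u\<in>{1..n}. \<exists>v\<in>S. dominates (path_E n) v (lam v) u"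
      using a unfolding ext_irr_dom_set_def path_V_def by blast
    then obtain v where v: "v \<in> S" "dominates (path_E n) v (lam v) u"
      using u by blast
    have "v \<in> {1..n}" using v S by auto
    then have "u + lam v = v \<or> u = v + lam v" using dominates_path[OF u] v(2) by blast
    then show "\<exists>v\<in>S. u + lam v = v \<or> u = v + lam v" using v(1) by blast
  qed
  then show "S \<subseteq> {1..n} \<and> inj_on lam S \<and> (\<forall>u\<in>{1..n}. \<exists>v\<in>S. u + lam v = v \<or> u = v + lam v) \<and> (\<exists>v\<in>S. lam v = 0)"
    using a S unfolding ext_irr_dom_set_def by auto
next
  assume a: "S \<subseteq> {1..n} \<and> inj_on lam S \<and> (\<forall>u\<in>{1..n}. \<exists>v\<in>S. u + lam v = v \<or> u = v + lam v) \<and> (\<exists>v\<in>S. lam v = 0)"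
  have "\<forall>u\<in>{1..n}. \<exists>v\<in>S. dominates (path_E n) v (lam v) u"
  proof
    fix u assume u: "u \<in> {1..n}"
    then obtain v where v: "v \<in> S" "u + lam v = v \<or> u = v + lam v" using a by blast
    have "v \<in> {1..n}" using v a by auto
    then have "dominates (path_E n) v (lam v) u" using dominates_path[OF u] v(2) by blast
    then show "\<exists>v\<in>S. dominates (path_E n) v (lam v) u" using v(1) by blast
  qed
  then show "ext_irr_dom_set (path_V n) (path_E n) S lam"
    using a unfolding ext_irr_dom_set_def path_V_def by auto
qed

theorem corollary5p8:
  fixes n :: nat
  assumes "n \<ge> 4" and "n \<noteq> 6" and "n \<noteq> 10"
  shows "of_nat (gamma_e (path_V n) (path_E n)) \<ge> \<lceil>(real n + 3) / 2\<rceil>"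
proof -
  obtain S0 lam0 where "Inv n S0 lam0" using Inv_exists assms(1) by blast
  then have "ext_irr_dom_set (path_V n) (path_E n) S0 lam0" unfolding ext_iff Inv_def by blast
  then have ex: "\<exists>k. \<exists>S lam. ext_irr_dom_set (path_V n) (path_E n) S lam \<and> card S = k" by blast
  have "\<exists>S lam. ext_irr_dom_set (path_V n) (path_E n) S lam \<and> card S = gamma_e (path_V n) (path_E n)"
    unfolding gamma_e_def by (rule LeastI_ex[OF ex])
  then obtain S lam where S: "ext_irr_dom_set (path_V n) (path_E n) S lam"
    and cS: "card S = gamma_e (path_V n) (path_E n)" by blast
  have "n + 3 \<le> 2 * card S"
    using S assms unfolding ext_iff by (intro lower_bound) auto
  then have "(real n + 3) / 2 \<le> real (gamma_e (path_V n) (path_E n))" using cS by simp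
  then show ?thesis by (simp add: ceiling_le_iff)
qed


end
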